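(* Assume $\phi(x)>0$ for all $x>0$ and $\phi$ is non-increasing. Let $i<j$ and let $d_{i+1},\dots,d_j\ge0$ be a fixed sequence of doses. Define two trajectories by $Y_{k+1}^+=F(Y_k^+)-\mathrm{BED}_T(d_{k+1})$ and $\widetilde Y_{k+1}^+=F(\widetilde Y_k^+)-\mathrm{BED}_T(d_{k+1})$ for $k=i,\dots,j-1$, starting from given values $Y_i^+$ and $\widetilde Y_i^+$. If $Y_i^+<\widetilde Y_i^+$, then $Y_j^+<\widetilde Y_j^+$ and $\widetilde Y_j^+-Y_j^+\le \widetilde Y_i^+-Y_i^+$.
   Context: Tumor parameter $\alpha_T>0$, $\beta_T>0$, $[\alpha/\beta]_T=\alpha_T/\beta_T$, and $\mathrm{BED}_T(d)=d\left(1+\frac{d}{[\alpha/\beta]_T}\right)$. Tumor growth follows $\frac{1}{x}\frac{dx}{dt}=\phi(x)$ with $\phi:(0,\infty)\to\mathbb{R}$ continuous and non-increasing. With $Y=\ln(\text{number of tumor cells})/\alpha_T$, $F$ denotes the map sending the value of $Y$ at time $t$ to its value at time $t+1$ under this ODE (one day of growth without radiation). *)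

theory Defs
  imports "HOL-Analysis.Analysis"
begin

definition BED_T :: "real \<Rightarrow> real \<Rightarrow> real \<Rightarrow> real" where
  "BED_T \<alpha>T \<beta>T d = d * (1 + d / (\<alpha>T / \<beta>T))"

definition growth_solution :: "(real \<Rightarrow> real) \<Rightarrow> real \<Rightarrow> (real \<Rightarrow> real) \<Rightarrow> bool" where
  "growth_solution \<phi> x0 x \<longleftrightarrow> x 0 = x0 \<and>
     (\<forall>t\<in>{0..1}. x t > 0 \<and> (x has_real_derivative x t * \<phi> (x t)) (at t within {0..1}))"

text \<open>F: value of Y = ln(cells)/alpha_T after one day of growth, starting from Y = y.\<close>
definition growth_map :: "real \<Rightarrow> (real \<Rightarrow> real) \<Rightarrow> real \<Rightarrow> real" where
  "growth_map \<alpha>T \<phi> y =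
     ln (THE x1. \<exists>x. growth_solution \<phi> (exp (\<alpha>T * y)) x \<and> x 1 = x1) / \<alpha>T"

end

theory Submission
  imports Defs
begin

locale gm =
  fixes \<phi> :: "real \<Rightarrow> real"
  assumes cont: "continuous_on {0<..} \<phi>"
    and pos: "\<forall>x>0. \<phi> x > 0"
    and mon: "\<forall>x y. 0 < x \<longrightarrow> x \<le> y \<longrightarrow> \<phi> y \<le> \<phi> x"
begin

definition h :: "real \<Rightarrow> real" where "h v = inverse (\<phi> (exp v))"

lemma h_pos: "h v > 0"
  using pos by (simp add: h_def)

lemma h_mono: assumes "v \<le> w" shows "h v \<le> h w"
proof -
  have "\<phi> (exp w) \<le> \<phi> (exp v)" using mon assms by simp
  moreover have "\<phi> (exp w) > 0" using pos by simp
  ultimately show ?thesis unfolding h_def by (rule le_imp_inverse_le)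
qed

lemma h_cont: "continuous_on S h"
proof -
  have "continuous_on UNIV (\<lambda>v. \<phi> (exp v))"
    by (rule continuous_on_compose2[OF cont]) (auto intro!: continuous_intros)
  then have "continuous_on UNIV h"
    unfolding h_def apply (auto intro!: continuous_intros) using pos by (metis exp_gt_zero less_irrefl)
  then show ?thesis by (rule continuous_on_subset) simp
qed

lemma h_int: "h integrable_on {a..b}"
  by (rule integrable_continuous_real) (rule h_cont)

lemma Icomb: "a \<le> c \<Longrightarrow> c \<le> b \<Longrightarrow> integral {a..c} h + integral {c..b} h = integral {a..b} h"
  by (rule Henstock_Kurzweil_Integration.integral_combine) (auto intro: h_int)

lemma Ilow: assumes "a \<le> b" shows "integral {a..b} h \<ge> (b - a) * h a"
proof -
  have "integral {a..b} (\<lambda>_. h a) \<le> integral {a..b} h"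
    by (rule integral_le) (auto intro: h_int h_mono)
  then show ?thesis using assms by simp
qed

lemma Ipos: "a < b \<Longrightarrow> integral {a..b} h > 0"
proof -
  assume ab: "a < b"
  have "(b - a) * h a > 0" using h_pos[of a] ab by simp
  then show ?thesis using Ilow[of a b] ab by linarith
qed

lemma Kd: assumes "p < v"
  shows "((\<lambda>w. integral {p..w} h) has_real_derivative h v) (at v)"
proof -
  have "((\<lambda>w. integral {p..w} h) has_real_derivative h v) (at v within {p..v+1})"
    by (rule integral_has_real_derivative) (use assms in \<open>auto intro: h_cont\<close>)
  moreover have "v \<in> interior {p..v+1}" using assms by simp
  then have "at v within {p..v+1} = at v" by (rule at_within_interior)
  ultimately show ?thesis by simp
qed

lemma Iuniq: assumes "u0 \<le> a" "u0 \<le> b" "integral {u0..a} h = integral {u0..b} h"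
  shows "a = b"
proof (rule ccontr)
  assume "a \<noteq> b"
  then consider "a < b" | "b < a" by linarith
  then show False
  proof cases
    case 1
    then show ?thesis using Icomb[of u0 a b] Ipos[of a b] assms by linarith
  next
    case 2
    then show ?thesis using Icomb[of u0 b a] Ipos[of b a] assms by linarith
  qed
qed

lemma sol_char:
  assumes sol: "growth_solution \<phi> (exp u0) x"
  shows "u0 \<le> ln (x 1) \<and> integral {u0..ln (x 1)} h = 1"
proof -
  define u where "u t = ln (x t)" for t
  have xpos: "\<And>t. t \<in> {0..1} \<Longrightarrow> x t > 0" using sol by (auto simp: growth_solution_def)
  have x0: "x 0 = exp u0" using sol by (simp add: growth_solution_def)
  have xd: "\<And>t. t \<in> {0..1} \<Longrightarrow> (x has_real_derivative x t * \<phi> (x t)) (at t within {0..1})"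
    using sol by (simp add: growth_solution_def)
  have ud: "(u has_real_derivative \<phi> (x t)) (at t within {0..1})" if t: "t \<in> {0..1}" for t
  proof -
    have "((\<lambda>t. ln (x t)) has_real_derivative inverse (x t) * (x t * \<phi> (x t))) (at t within {0..1})"
      by (rule DERIV_chain2[OF DERIV_ln xd[OF t]]) (use xpos[OF t] in auto)
    then show ?thesis using xpos[OF t] by (simp add: u_def[abs_def] field_simps)
  qed
  have ucont: "continuous_on {0..1} u"
    unfolding continuous_on_eq_continuous_within using ud DERIV_continuous by blast
  have u0: "u 0 = u0" using x0 by (simp add: u_def)
  have uge: "u t \<ge> u0" if t: "t \<in> {0..1}" for t
  proof -
    have "u 0 \<le> u t"
    proof (rule DERIV_nonneg_imp_increasing_open[of 0 t u])
      show "0 \<le> t" using t by simp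
      fix s assume s: "0 < s" "s < t"
      then have "s \<in> interior {0..1::real}" using t by auto
      then have eq: "at s within {0..1::real} = at s" by (rule at_within_interior)
      have sin: "s \<in> {0..1}" using s t by simp
      have "(u has_real_derivative \<phi> (x s)) (at s within {0..1})" by (rule ud[OF sin])
      then have "(u has_real_derivative \<phi> (x s)) (at s)" unfolding eq .
      moreover have "\<phi> (x s) > 0" using pos xpos[OF sin] by blast
      ultimately show "\<exists>y. DERIV u s :> y \<and> y \<ge> 0" by (blast intro: less_imp_le)
    next
      show "continuous_on {0..t} u" by (rule continuous_on_subset[OF ucont]) (use t in auto)
    qed
    then show ?thesis using u0 by simp
  qed
  define p where "p = u0 - 1"
  define G where "G t = integral {p..u t} h - t" for t
  have Gd: "(G has_real_derivative 0) (at t within {0..1})" if t: "t \<in> {0..1}" for t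
  proof -
    have pu: "p < u t" using uge[OF t] by (simp add: p_def)
    have "((\<lambda>t. integral {p..u t} h) has_real_derivative h (u t) * \<phi> (x t)) (at t within {0..1})"
      by (rule DERIV_chain2[OF Kd[OF pu] ud[OF t]])
    moreover have "h (u t) * \<phi> (x t) = 1"
    proof -
      have "\<phi> (x t) > 0" using xpos[OF t] pos by blast
      then show ?thesis using xpos[OF t] by (simp add: h_def u_def)
    qed
    ultimately have "((\<lambda>t. integral {p..u t} h) has_real_derivative 1) (at t within {0..1})" by simp
    then have "((\<lambda>t. integral {p..u t} h - t) has_real_derivative 1 - 1) (at t within {0..1})"
      by (intro derivative_intros)
    then show ?thesis by (simp add: G_def[abs_def])
  qed
  obtain c where c: "\<forall>t\<in>{0..1}. G t = c"
    using has_field_derivative_zero_constant[of "{0..1::real}" G] Gd by auto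
  then have "G 1 = G 0" by auto
  then have "integral {p..u 1} h = integral {p..u0} h + 1" using u0 by (simp add: G_def)
  moreover have "integral {p..u0} h + integral {u0..u 1} h = integral {p..u 1} h"
    by (rule Icomb) (use uge[of 1] in \<open>auto simp: p_def\<close>)
  ultimately show ?thesis using uge[of 1] by (simp add: u_def)
qed

lemma Kstrict: "p \<le> v \<Longrightarrow> v < w \<Longrightarrow> integral {p..v} h < integral {p..w} h"
  using Icomb[of p v w] Ipos[of v w] by linarith

lemma sol_exists: "\<exists>x. growth_solution \<phi> (exp u0) x"
proof -
  define p where "p = u0 - 1"
  define K where "K v = integral {p..v} h" for v
  define lo where "lo = u0 - 1/2"
  define q where "q = u0 + 2 / h u0"
  define S where "S = {lo..q}"
  have hu0: "h u0 > 0" by (rule h_pos)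
  have lo_u0: "lo < u0" by (simp add: lo_def)
  have u0_q: "u0 < q" using hu0 by (simp add: q_def)
  have Kder: "\<And>v. p < v \<Longrightarrow> (K has_real_derivative h v) (at v)"
    unfolding K_def[abs_def] by (rule Kd)
  have Kmono: "\<And>v w. p \<le> v \<Longrightarrow> v < w \<Longrightarrow> K v < K w"
    unfolding K_def by (rule Kstrict)
  have Kcont: "continuous_on S K"
  proof -
    have "\<forall>v\<in>S. isCont K v"
    proof
      fix v assume "v \<in> S"
      then have "p < v" by (simp add: S_def lo_def p_def)
      then show "isCont K v" using Kder DERIV_isCont by blast
    qed
    then show ?thesis by (simp add: continuous_at_imp_continuous_on)
  qed
  have pS: "\<And>v. v \<in> S \<Longrightarrow> p < v" by (simp add: S_def lo_def p_def)
  have inj: "inj_on K S"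
  proof (rule inj_onI)
    fix v w assume vS: "v \<in> S" and wS: "w \<in> S" and eq: "K v = K w"
    show "v = w"
    proof (rule ccontr)
      assume "v \<noteq> w"
      then consider "v < w" | "w < v" by linarith
      then show False
      proof cases
        case 1
        have "K v < K w" by (rule Kmono[OF less_imp_le[OF pS[OF vS]] 1])
        then show False using eq by simp
      next
        case 2
        have "K w < K v" by (rule Kmono[OF less_imp_le[OF pS[OF wS]] 2])
        then show False using eq by simp
      qed
    qed
  qed
  define ginv where "ginv = the_inv_into S K"
  have gcont: "continuous_on (K ` S) ginv"
    unfolding ginv_def by (rule continuous_on_inv_into[OF Kcont _ inj]) (simp add: S_def)
  have Klo: "K lo < K u0" using Kmono[of lo u0] lo_u0 by (simp add: lo_def p_def)
  have Kq: "K u0 + 2 \<le> K q"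
  proof -
    have "K q = K u0 + integral {u0..q} h"
      using Icomb[of p u0 q] u0_q by (simp add: K_def p_def)
    moreover have "integral {u0..q} h \<ge> (q - u0) * h u0" using Ilow u0_q by simp
    moreover have "(q - u0) * h u0 = 2" using hu0 by (simp add: q_def)
    ultimately show ?thesis by simp
  qed
  have img: "{K lo..K q} \<subseteq> K ` S"
  proof
    fix y assume y: "y \<in> {K lo..K q}"
    have "lo \<le> q" using lo_u0 u0_q by simp
    then obtain v where "lo \<le> v" "v \<le> q" "K v = y"
      using IVT'[of K lo y q] y Kcont by (auto simp: S_def)
    then show "y \<in> K ` S" by (auto simp: S_def)
  qed
  have inv1: "\<And>y. y \<in> K ` S \<Longrightarrow> K (ginv y) = y \<and> ginv y \<in> S"
    unfolding ginv_def using inj by (auto simp: f_the_inv_into_f the_inv_into_into)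
  have gder: "DERIV ginv y :> inverse (h (ginv y))" if y: "K lo < y" "y < K q" for y
  proof (rule DERIV_inverse_function[where f = K and a = "K lo" and b = "K q"])
    have yS: "y \<in> K ` S" using img y by auto
    show "DERIV K (ginv y) :> h (ginv y)" using Kder pS inv1[OF yS] by blast
    show "h (ginv y) \<noteq> 0" using h_pos[of "ginv y"] by simp
    show "K lo < y" "y < K q" by (fact y)+
    show "K (ginv y') = y'" if "K lo < y'" "y' < K q" for y'
    proof -
      have "y' \<in> K ` S" using img that by auto
      then show ?thesis using inv1 by blast
    qed
    have "y \<in> interior (K ` S)"
    proof -
      have "y \<in> {K lo<..<K q}" using y by simp
      moreover have "{K lo<..<K q} \<subseteq> K ` S" using img by auto
      moreover have "{K lo<..<K q} \<subseteq> interior (K ` S)"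
        using interior_maximal[OF \<open>{K lo<..<K q} \<subseteq> K ` S\<close> open_greaterThanLessThan] .
      ultimately show ?thesis by blast
    qed
    then show "isCont ginv y" using continuous_on_interior[OF gcont] by blast
  qed
  define x where "x t = exp (ginv (K u0 + t))" for t
  have u0S: "u0 \<in> S" using lo_u0 u0_q by (simp add: S_def)
  have "ginv (K u0) = u0" unfolding ginv_def using inj u0S by (rule the_inv_into_f_f)
  then have x0: "x 0 = exp u0" by (simp add: x_def)
  have xd: "(x has_real_derivative x t * \<phi> (x t)) (at t)" if t: "t \<in> {0..1}" for t
  proof -
    have y: "K lo < K u0 + t" "K u0 + t < K q" using t Klo Kq by auto
    have d1: "((\<lambda>t. K u0 + t) has_real_derivative 1) (at t)"
      by (auto intro!: derivative_eq_intros)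
    have "((\<lambda>t. ginv (K u0 + t)) has_real_derivative inverse (h (ginv (K u0 + t))) * 1) (at t)"
      by (rule DERIV_chain2[OF gder[OF y] d1])
    then have "((\<lambda>t. exp (ginv (K u0 + t))) has_real_derivative
        exp (ginv (K u0 + t)) * (inverse (h (ginv (K u0 + t))) * 1)) (at t)"
      by (rule DERIV_chain2[OF DERIV_exp])
    moreover have "inverse (h (ginv (K u0 + t))) = \<phi> (x t)"
      by (simp add: h_def x_def)
    ultimately show ?thesis by (simp add: x_def[abs_def])
  qed
  have "growth_solution \<phi> (exp u0) x"
    unfolding growth_solution_def
  proof (intro conjI ballI)
    show "x 0 = exp u0" by (fact x0)
    fix t :: real assume t: "t \<in> {0..1}"
    show "x t > 0" by (simp add: x_def)
    show "(x has_real_derivative x t * \<phi> (x t)) (at t within {0..1})"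
      using xd[OF t] by (rule has_field_derivative_at_within)
  qed
  then show ?thesis by blast
qed

lemma gm_char:
  assumes "\<alpha> > 0"
  shows "\<exists>u1. \<alpha> * y \<le> u1 \<and> integral {\<alpha> * y..u1} h = 1 \<and> growth_map \<alpha> \<phi> y = u1 / \<alpha>"
proof -
  obtain x where x: "growth_solution \<phi> (exp (\<alpha> * y)) x" using sol_exists by blast
  have uq: "x' 1 = x 1" if x': "growth_solution \<phi> (exp (\<alpha> * y)) x'" for x'
  proof -
    have "ln (x' 1) = ln (x 1)"
    proof -
      have A: "\<alpha> * y \<le> ln (x' 1)" "integral {\<alpha> * y..ln (x' 1)} h = 1" using sol_char[OF x'] by auto
      have B: "\<alpha> * y \<le> ln (x 1)" "integral {\<alpha> * y..ln (x 1)} h = 1" using sol_char[OF x] by auto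
      show ?thesis by (rule Iuniq[OF A(1) B(1)]) (simp add: A(2) B(2))
    qed
    moreover have "x' 1 > 0" "x 1 > 0" using x x' by (auto simp: growth_solution_def)
    ultimately show ?thesis by simp
  qed
  have "(THE x1. \<exists>x. growth_solution \<phi> (exp (\<alpha> * y)) x \<and> x 1 = x1) = x 1"
  proof (rule the_equality)
    show "\<exists>x'. growth_solution \<phi> (exp (\<alpha> * y)) x' \<and> x' 1 = x 1" using x by blast
    fix x1 assume "\<exists>x'. growth_solution \<phi> (exp (\<alpha> * y)) x' \<and> x' 1 = x1"
    then obtain x' where "growth_solution \<phi> (exp (\<alpha> * y)) x'" "x' 1 = x1" by blast
    then show "x1 = x 1" using uq by blast
  qed
  then have "growth_map \<alpha> \<phi> y = ln (x 1) / \<alpha>" by (simp add: growth_map_def)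
  then show ?thesis using sol_char[OF x] by blast
qed

lemma compare:
  assumes "a < b" "a \<le> ua" "integral {a..ua} h = 1" "b \<le> ub" "integral {b..ub} h = 1"
  shows "ua < ub \<and> ub - ua \<le> b - a"
proof
  show "ua < ub"
  proof (rule ccontr)
    assume "\<not> ua < ub"
    then have "ub \<le> ua" by simp
    have "integral {a..b} h + integral {b..ua} h = integral {a..ua} h"
      using Icomb[of a b ua] assms \<open>ub \<le> ua\<close> by simp
    moreover have "integral {b..ub} h + integral {ub..ua} h = integral {b..ua} h"
      using Icomb[of b ub ua] assms \<open>ub \<le> ua\<close> by simp
    moreover have "integral {ub..ua} h \<ge> 0"
    proof -
      have "(ua - ub) * h ub \<ge> 0" using h_pos[of ub] \<open>ub \<le> ua\<close> by simp
      then show ?thesis using Ilow[of ub ua] \<open>ub \<le> ua\<close> by linarith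
    qed
    moreover have "integral {a..b} h > 0" using Ipos assms by simp
    ultimately show False using assms by linarith
  qed
next
  define \<delta> where "\<delta> = b - a"
  have sh: "integral {a..ua} (h \<circ> (+) \<delta>) = integral {a + \<delta>..ua + \<delta>} h"
    by (rule integral_shift_Icc_real)
  have "integral {a..ua} h \<le> integral {a..ua} (h \<circ> (+) \<delta>)"
  proof (rule integral_le)
    have "continuous_on {a..ua} (h \<circ> (+) \<delta>)"
      by (rule continuous_on_compose) (auto intro: continuous_intros h_cont)
    then show "(h \<circ> (+) \<delta>) integrable_on {a..ua}" by (rule integrable_continuous_real)
    show "h integrable_on {a..ua}" by (rule h_int)
    fix v show "h v \<le> (h \<circ> (+) \<delta>) v" using assms(1) by (auto intro: h_mono simp: \<delta>_def)
  qed
  then have ge: "integral {b..ua + \<delta>} h \<ge> 1" using sh assms by (simp add: \<delta>_def)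
  show "ub - ua \<le> b - a"
  proof (rule ccontr)
    assume "\<not> ub - ua \<le> b - a"
    then have lt: "ua + \<delta> < ub" by (simp add: \<delta>_def)
    have "integral {b..ua + \<delta>} h + integral {ua + \<delta>..ub} h = integral {b..ub} h"
      using Icomb[of b "ua + \<delta>" ub] assms lt by (simp add: \<delta>_def)
    then show False using Ipos[OF lt] ge assms by linarith
  qed
qed

end


theorem lemma2:
  fixes \<alpha>T \<beta>T :: real and \<phi> :: "real \<Rightarrow> real"
    and i j :: nat and d Y Yt :: "nat \<Rightarrow> real"
  assumes "\<alpha>T > 0" and "\<beta>T > 0"
    and "continuous_on {0<..} \<phi>"
    and "\<forall>x>0. \<phi> x > 0"
    and "\<forall>x y. 0 < x \<longrightarrow> x \<le> y \<longrightarrow> \<phi> y \<le> \<phi> x"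
    and "i < j"
    and "\<forall>k\<in>{i+1..j}. d k \<ge> 0"
    and "\<forall>k\<in>{i..<j}. Y (k+1) = growth_map \<alpha>T \<phi> (Y k) - BED_T \<alpha>T \<beta>T (d (k+1))"
    and "\<forall>k\<in>{i..<j}. Yt (k+1) = growth_map \<alpha>T \<phi> (Yt k) - BED_T \<alpha>T \<beta>T (d (k+1))"
    and "Y i < Yt i"
  shows "Y j < Yt j \<and> Yt j - Y j \<le> Yt i - Y i"
proof -
  interpret gm \<phi> using assms(3-5) by unfold_locales
  have step: "Y (k+1) < Yt (k+1) \<and> Yt (k+1) - Y (k+1) \<le> Yt k - Y k"
    if k: "k \<in> {i..<j}" and lt: "Y k < Yt k" for k
  proof -
    obtain ua where ua: "\<alpha>T * Y k \<le> ua" "integral {\<alpha>T * Y k..ua} h = 1"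
      "growth_map \<alpha>T \<phi> (Y k) = ua / \<alpha>T" using gm_char[OF assms(1)] by blast
    obtain ub where ub: "\<alpha>T * Yt k \<le> ub" "integral {\<alpha>T * Yt k..ub} h = 1"
      "growth_map \<alpha>T \<phi> (Yt k) = ub / \<alpha>T" using gm_char[OF assms(1)] by blast
    have ab: "\<alpha>T * Y k < \<alpha>T * Yt k" using lt assms(1) by simp
    have c: "ua < ub \<and> ub - ua \<le> \<alpha>T * Yt k - \<alpha>T * Y k"
      by (rule compare[OF ab ua(1,2) ub(1,2)])
    have e: "Yt (k+1) - Y (k+1) = ub / \<alpha>T - ua / \<alpha>T"
      using assms(8,9) k ua(3) ub(3) by simp
    have "ub / \<alpha>T - ua / \<alpha>T = (ub - ua) / \<alpha>T" by (simp add: diff_divide_distrib)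
    moreover have "(ub - ua) / \<alpha>T > 0" using c assms(1) by simp
    moreover have "(ub - ua) / \<alpha>T \<le> Yt k - Y k"
    proof -
      have "ub - ua \<le> (Yt k - Y k) * \<alpha>T" using c by (simp add: algebra_simps)
      then show ?thesis using pos_divide_le_eq[OF assms(1)] by simp
    qed
    ultimately show ?thesis using e by linarith
  qed
  have "\<forall>n. i + n \<le> j \<longrightarrow> Y (i+n) < Yt (i+n) \<and> Yt (i+n) - Y (i+n) \<le> Yt i - Y i"
  proof
    fix n show "i + n \<le> j \<longrightarrow> Y (i+n) < Yt (i+n) \<and> Yt (i+n) - Y (i+n) \<le> Yt i - Y i"
    proof (induction n)
      case 0
      then show ?case using assms(10) by simp
    next
      case (Suc n)
      show ?case
      proof
        assume le: "i + Suc n \<le> j"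
        then have IH: "Y (i+n) < Yt (i+n) \<and> Yt (i+n) - Y (i+n) \<le> Yt i - Y i" using Suc by simp
        have "i + n \<in> {i..<j}" using le by simp
        then have "Y (i+n+1) < Yt (i+n+1) \<and> Yt (i+n+1) - Y (i+n+1) \<le> Yt (i+n) - Y (i+n)"
          using step IH by blast
        then show "Y (i + Suc n) < Yt (i + Suc n) \<and> Yt (i + Suc n) - Y (i + Suc n) \<le> Yt i - Y i"
          using IH by simp
      qed
    qed
  qed
  then have "Y (i + (j - i)) < Yt (i + (j - i)) \<and> Yt (i + (j - i)) - Y (i + (j - i)) \<le> Yt i - Y i"
    using assms(6) by (auto dest: spec[of _ "j - i"])
  moreover have "i + (j - i) = j" using assms(6) by simp
  ultimately show ?thesis by simp
qed

end
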